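(* Let $G$ be a finite group whose non-centralizer graph $\Upsilon_G$ is regular. Then for each $x\in G$, the centralizer $C_G(x)$ is a normal subgroup of $G$ and $G/C_G(x)$ is isomorphic to a subgroup of $Z(G)$.
   Context: For a finite group $G$, $C_G(x)$ denotes the centralizer of $x\in G$ and $Z(G)$ the center. The non-centralizer graph $\Upsilon_G$ is the simple graph with vertex set $G$ in which two distinct vertices $x,y$ are adjacent if and only if $C_G(x)\neq C_G(y)$. A graph is regular if all its vertices have the same degree. *)

theory Defs
  imports "HOL-Algebra.Algebra"
begin

definition centralizer :: "('a, 'b) monoid_scheme \<Rightarrow> 'a \<Rightarrow> 'a set" where
  "centralizer G x = {y \<in> carrier G. x \<otimes>\<^bsub>G\<^esub> y = y \<otimes>\<^bsub>G\<^esub> x}"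

definition center :: "('a, 'b) monoid_scheme \<Rightarrow> 'a set" where
  "center G = {z \<in> carrier G. \<forall>y \<in> carrier G. z \<otimes>\<^bsub>G\<^esub> y = y \<otimes>\<^bsub>G\<^esub> z}"

definition noncentralizer_adj :: "('a, 'b) monoid_scheme \<Rightarrow> 'a \<Rightarrow> 'a \<Rightarrow> bool" where
  "noncentralizer_adj G x y \<longleftrightarrow> x \<noteq> y \<and> centralizer G x \<noteq> centralizer G y"

definition noncentralizer_degree :: "('a, 'b) monoid_scheme \<Rightarrow> 'a \<Rightarrow> nat" where
  "noncentralizer_degree G x = card {y \<in> carrier G. noncentralizer_adj G x y}"

definition noncentralizer_graph_regular :: "('a, 'b) monoid_scheme \<Rightarrow> bool" where
  "noncentralizer_graph_regular G \<longleftrightarrow>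
     (\<forall>x \<in> carrier G. \<forall>y \<in> carrier G. noncentralizer_degree G x = noncentralizer_degree G y)"

end

theory Submission
  imports Defs
begin


lemma (in group) comm_inv_left:
  assumes "a \<in> carrier G" "b \<in> carrier G" "a \<otimes> b = b \<otimes> a"
  shows "inv a \<otimes> b = b \<otimes> inv a"
proof -
  have "inv a \<otimes> b = inv a \<otimes> (b \<otimes> a) \<otimes> inv a"
    using assms(1,2) by (simp add: m_assoc)
  also have "\<dots> = inv a \<otimes> (a \<otimes> b) \<otimes> inv a" using assms(3) by simp
  also have "\<dots> = b \<otimes> inv a" using assms(1,2) by (metis l_inv l_one m_assoc inv_closed)
  finally show ?thesis .
qed

lemma (in group) center_mult:
  assumes "a \<in> center G" "b \<in> center G" shows "a \<otimes> b \<in> center G"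
proof -
  have a: "a \<in> carrier G" "\<And>y. y \<in> carrier G \<Longrightarrow> a \<otimes> y = y \<otimes> a"
   and b: "b \<in> carrier G" "\<And>y. y \<in> carrier G \<Longrightarrow> b \<otimes> y = y \<otimes> b"
    using assms unfolding center_def by auto
  have "a \<otimes> b \<otimes> y = y \<otimes> (a \<otimes> b)" if y: "y \<in> carrier G" for y
  proof -
    have "a \<otimes> b \<otimes> y = a \<otimes> (b \<otimes> y)" using a b y by (rule_tac m_assoc) auto
    also have "\<dots> = a \<otimes> (y \<otimes> b)" using b(2)[OF y] by simp
    also have "\<dots> = (a \<otimes> y) \<otimes> b" using a b y by (metis m_assoc)
    also have "\<dots> = (y \<otimes> a) \<otimes> b" using a(2)[OF y] by simp
    also have "\<dots> = y \<otimes> (a \<otimes> b)" using a b y by (metis m_assoc)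
    finally show ?thesis .
  qed
  then show ?thesis using a(1) b(1) unfolding center_def by blast
qed

lemma (in group) center_carrier: "a \<in> center G \<Longrightarrow> a \<in> carrier G"
  unfolding center_def by blast

lemma (in group) center_comm: "a \<in> center G \<Longrightarrow> y \<in> carrier G \<Longrightarrow> a \<otimes> y = y \<otimes> a"
  unfolding center_def by blast

lemma (in group) center_inv:
  assumes "a \<in> center G" shows "inv a \<in> center G"
proof -
  have "inv a \<otimes> y = y \<otimes> inv a" if "y \<in> carrier G" for y
    using comm_inv_left[OF center_carrier[OF assms] that center_comm[OF assms that]] .
  then show ?thesis using center_carrier[OF assms] unfolding center_def by blast
qed

lemma (in group) centralizer_inv:
  assumes "y \<in> carrier G" shows "centralizer G (inv y) = centralizer G y"
proof -
  have "inv y \<otimes> w = w \<otimes> inv y \<longleftrightarrow> y \<otimes> w = w \<otimes> y" if w: "w \<in> carrier G" for w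
    using comm_inv_left[OF assms w] comm_inv_left[OF inv_closed[OF assms] w] assms
    by (metis inv_inv)
  then show ?thesis unfolding centralizer_def by blast
qed

lemma (in group) centralizer_center_mult:
  assumes "y \<in> carrier G" "z \<in> center G" shows "centralizer G (y \<otimes> z) = centralizer G y"
proof -
  have zc: "z \<in> carrier G" using center_carrier[OF assms(2)] .
  have "y \<otimes> z \<otimes> w = w \<otimes> (y \<otimes> z) \<longleftrightarrow> y \<otimes> w = w \<otimes> y" if w: "w \<in> carrier G" for w
  proof -
    have "y \<otimes> z \<otimes> w = (y \<otimes> w) \<otimes> z" using center_comm[OF assms(2) w] w assms zc
      by (metis m_assoc)
    moreover have "w \<otimes> (y \<otimes> z) = (w \<otimes> y) \<otimes> z" using w assms zc by (metis m_assoc)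
    ultimately show ?thesis using w assms zc by simp
  qed
  then show ?thesis unfolding centralizer_def by blast
qed

lemma (in group) centralizer_carrier_iff:
  assumes "y \<in> carrier G" shows "centralizer G y = carrier G \<longleftrightarrow> y \<in> center G"
  using assms unfolding centralizer_def center_def by auto



lemma (in group) main:
  assumes "True" and fin: "finite (carrier G)"
    and reg: "noncentralizer_graph_regular G"
    and x: "x \<in> carrier G"
  shows "centralizer G x \<lhd> G \<and>
         (\<exists>H. subgroup H G \<and> H \<subseteq> center G \<and>
              G Mod (centralizer G x) \<cong> subgroup_generated G H)"
proof -
  define S where "S y = {w \<in> carrier G. centralizer G w = centralizer G y}" for y
  have Ssub: "S y \<subseteq> carrier G" for y unfolding S_def by blast
  have deg: "noncentralizer_degree G y = card (carrier G) - card (S y)" for y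
  proof -
    have "{w \<in> carrier G. noncentralizer_adj G y w} = carrier G - S y"
      unfolding S_def noncentralizer_adj_def by blast
    then show ?thesis unfolding noncentralizer_degree_def
      using card_Diff_subset[OF finite_subset[OF Ssub fin] Ssub] by simp
  qed
  have cc: "center G \<subseteq> carrier G" unfolding center_def by blast
  have C1: "centralizer G \<one> = carrier G" unfolding centralizer_def by auto
  have S1: "S \<one> = center G"
    unfolding S_def C1 using centralizer_carrier_iff cc by blast
  have cardS: "card (S y) = card (center G)" if y: "y \<in> carrier G" for y
  proof -
    have "noncentralizer_degree G y = noncentralizer_degree G \<one>"
      using reg y unfolding noncentralizer_graph_regular_def by blast
    moreover have "card (S y) \<le> card (carrier G)" "card (S \<one>) \<le> card (carrier G)"
      using card_mono[OF fin Ssub] by auto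
    ultimately show ?thesis using deg S1 by simp
  qed
  have Seq: "S y = (\<lambda>z. y \<otimes> z) ` center G" if y: "y \<in> carrier G" for y
  proof -
    have sub: "(\<lambda>z. y \<otimes> z) ` center G \<subseteq> S y"
      unfolding S_def using centralizer_center_mult[OF y] cc y by auto
    have "inj_on (\<lambda>z. y \<otimes> z) (center G)" 
    proof (rule inj_onI)
      fix a b assume "a \<in> center G" "b \<in> center G" "y \<otimes> a = y \<otimes> b"
      then show "a = b" using cc y l_cancel by blast
    qed
    then have "card ((\<lambda>z. y \<otimes> z) ` center G) = card (S y)"
      using card_image cardS[OF y] by metis
    then show ?thesis using card_subset_eq[OF finite_subset[OF Ssub fin] sub] by simp
  qed
  have sq: "y \<otimes> y \<in> center G" if y: "y \<in> carrier G" for y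
  proof -
    have "inv y \<in> S y" unfolding S_def using centralizer_inv y by auto
    then obtain z where z: "z \<in> center G" "inv y = y \<otimes> z" using Seq[OF y] by auto
    have zc: "z \<in> carrier G" using z cc by auto
    have "y \<otimes> y \<otimes> z = \<one>" using z y zc by (metis m_assoc r_inv)
    then have "y \<otimes> y = inv z" using y zc by (metis inv_equality m_closed)
    then show ?thesis using center_inv[OF z(1)] by simp
  qed
  have comm: "g \<otimes> h \<otimes> inv g \<otimes> inv h \<in> center G"
    if g: "g \<in> carrier G" and h: "h \<in> carrier G" for g h
  proof -
    define a where "a = g \<otimes> g"
    define b where "b = h \<otimes> h"
    define c where "c = (g \<otimes> h) \<otimes> (g \<otimes> h)"
    have a: "a \<in> center G" and b: "b \<in> center G" and c: "c \<in> center G"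
      using sq g h unfolding a_def b_def c_def by auto
    have ia: "inv a \<in> center G" and ib: "inv b \<in> center G" using a b center_inv by auto
    have iac: "inv a \<in> carrier G" using ia cc by auto
    have ibc: "inv b \<in> carrier G" using ib cc by auto
    have ig: "inv g = g \<otimes> inv a" using g unfolding a_def
      by (simp add: inv_mult_group m_assoc[symmetric])
    have ih: "inv h = h \<otimes> inv b" using h unfolding b_def
      by (simp add: inv_mult_group m_assoc[symmetric])
    have "g \<otimes> h \<otimes> inv g \<otimes> inv h = g \<otimes> h \<otimes> g \<otimes> (inv a \<otimes> h) \<otimes> inv b"
      using g h iac ibc by (simp add: ig ih m_assoc)
    also have "\<dots> = g \<otimes> h \<otimes> g \<otimes> (h \<otimes> inv a) \<otimes> inv b"
      using center_comm[OF ia h] by simp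
    also have "\<dots> = c \<otimes> inv a \<otimes> inv b"
      using g h iac ibc unfolding c_def by (simp add: m_assoc)
    finally show ?thesis using c ia ib center_mult by simp
  qed
  define phi where "phi g = g \<otimes> x \<otimes> inv g \<otimes> inv x" for g
  have phic: "phi g \<in> center G" if "g \<in> carrier G" for g
    unfolding phi_def using comm that x by simp
  have phicc: "phi g \<in> carrier G" if "g \<in> carrier G" for g using phic[OF that] cc by auto
  have hom: "phi \<in> hom G G"
  proof (rule homI)
    fix g assume "g \<in> carrier G" then show "phi g \<in> carrier G" using phicc by simp
  next
    fix g h assume g: "g \<in> carrier G" and h: "h \<in> carrier G"
    have "phi (g \<otimes> h) = g \<otimes> phi h \<otimes> x \<otimes> inv g \<otimes> inv x"
      using g h x unfolding phi_def by (simp add: inv_mult_group m_assoc)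
    also have "\<dots> = g \<otimes> (phi h \<otimes> (x \<otimes> inv g \<otimes> inv x))"
      using g h x phicc by (simp add: m_assoc)
    also have "\<dots> = g \<otimes> ((x \<otimes> inv g \<otimes> inv x) \<otimes> phi h)"
      using center_comm[OF phic[OF h], of "x \<otimes> inv g \<otimes> inv x"] g x by simp
    also have "\<dots> = phi g \<otimes> phi h"
      using g h x phicc unfolding phi_def by (simp add: m_assoc)
    finally show "phi (g \<otimes> h) = phi g \<otimes> phi h" .
  qed
  define H where "H = phi ` carrier G"
  have gh: "group_hom G G phi" using hom by (simp add: group_hom_def group_hom_axioms_def is_group)
  have subH: "subgroup H G" unfolding H_def using group_hom.img_is_subgroup[OF gh] .
  have Hc: "H \<subseteq> center G" unfolding H_def using phic by auto
  have gh2: "group_hom G (subgroup_generated G H) phi"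
    using hom_into_subgroup[OF hom] H_def
    by (simp add: group_hom_def group_hom_axioms_def is_group)
  have ker: "kernel G (subgroup_generated G H) phi = centralizer G x"
  proof -
    have "phi g = \<one> \<longleftrightarrow> x \<otimes> g = g \<otimes> x" if g: "g \<in> carrier G" for g
    proof -
      have "phi g = \<one> \<longleftrightarrow> g \<otimes> x \<otimes> inv g = x"
        unfolding phi_def using g x
        by (metis inv_closed m_closed inv_equality inv_inv r_inv)
      also have "\<dots> \<longleftrightarrow> g \<otimes> x = x \<otimes> g"
        using g x by (metis inv_closed m_closed r_inv r_one m_assoc)
      finally show ?thesis by auto
    qed
    then show ?thesis unfolding kernel_def centralizer_def by auto
  qed
  have "centralizer G x \<lhd> G" using group_hom.normal_kernel[OF gh2] ker by simp
  moreover have "G Mod (centralizer G x) \<cong> subgroup_generated G H"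
    using group_hom.FactGroup_iso[OF gh2] ker subgroup.carrier_subgroup_generated_subgroup[OF subH]
    H_def by simp
  ultimately show ?thesis using subH Hc by blast
qed


theorem theorem2p10:
  fixes G :: "('a, 'b) monoid_scheme"
  assumes "group G" and "finite (carrier G)"
    and "noncentralizer_graph_regular G"
    and "x \<in> carrier G"
  shows "centralizer G x \<lhd> G \<and>
         (\<exists>H. subgroup H G \<and> H \<subseteq> center G \<and>
              G Mod (centralizer G x) \<cong> subgroup_generated G H)"
  using group.main[OF assms(1) TrueI assms(2-4)] .

end
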